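(* In the homogeneous, resource-abundant setting ($N_k=N>0$ for all $k\in[n]$, $F\ge nN$), let $\boldsymbol O^*$ have $O^*_{\mathcal N}=N/2$ and $O^*_i=0$ for $i<\mathcal N$. Let $\boldsymbol\varepsilon=(0,\dots,0,-\eta)\in\mathbb R^{\mathcal N}$ with $\eta>0$. Then $$T(\boldsymbol\varepsilon)\le-\boldsymbol O^{*t}M\boldsymbol\varepsilon,$$ where $T(\boldsymbol\varepsilon)=\boldsymbol l^t\boldsymbol\varepsilon+\frac12\boldsymbol\varepsilon^tM\boldsymbol\varepsilon$.
   Context: Fix an integer $n\ge2$ and write $[m]=\{1,\dots,m\}$. Let $\mathcal X$ be the collection of subsets of $[n]$ with at least two elements, $\mathcal N=2^n-n-1$, and let $I:\mathcal X\to[\mathcal N]$ be a bijection such that $A\subsetneq B$ implies $I(A)<I(B)$ (so $I([n])=\mathcal N$). Write $f(c)=|I^{-1}(c)|$, $S(c)=\{i\in[\mathcal N]:I^{-1}(c)\subseteq I^{-1}(i)\}$, $B(c)=\{i\in[\mathcal N]:I^{-1}(i)\subsetneq I^{-1}(c)\}$. With effective knowledges $N_k'=\min\{N_k,F\}$ (here all equal to $N$), the objective is $$T(\boldsymbol O)=\sum_{c=1}^{\mathcal N}\frac{\sum_{a\in S(c)}O_a}{\prod_{k\in I^{-1}(c)}N_k'}\Big(\sum_{k\in I^{-1}(c)}N_k'-f(c)\sum_{a\in S(c)}O_a-(f(c)-1)\sum_{a\in B(c)}O_a\Big),$$ and $\boldsymbol l$, $M$ (symmetric) are the unique vector and matrix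 with $T(\boldsymbol O)=\boldsymbol l^t\boldsymbol O+\frac12\boldsymbol O^tM\boldsymbol O$ on $\mathbb R^{\mathcal N}$. *)

theory Defs
  imports Complex_Main
begin

definition Xsets :: "nat \<Rightarrow> nat set set" where
  "Xsets n = {A. A \<subseteq> {1..n} \<and> 2 \<le> card A}"

definition NN :: "nat \<Rightarrow> nat" where
  "NN n = 2 ^ n - n - 1"

definition admissible_index :: "nat \<Rightarrow> (nat set \<Rightarrow> nat) \<Rightarrow> bool" where
  "admissible_index n I \<longleftrightarrow> bij_betw I (Xsets n) {1..NN n} \<and>
     (\<forall>A\<in>Xsets n. \<forall>B\<in>Xsets n. A \<subset> B \<longrightarrow> I A < I B)"

definition Iinv :: "nat \<Rightarrow> (nat set \<Rightarrow> nat) \<Rightarrow> nat \<Rightarrow> nat set" where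
  "Iinv n I c = inv_into (Xsets n) I c"

definition Sset :: "nat \<Rightarrow> (nat set \<Rightarrow> nat) \<Rightarrow> nat \<Rightarrow> nat set" where
  "Sset n I c = {i \<in> {1..NN n}. Iinv n I c \<subseteq> Iinv n I i}"

definition Bset :: "nat \<Rightarrow> (nat set \<Rightarrow> nat) \<Rightarrow> nat \<Rightarrow> nat set" where
  "Bset n I c = {i \<in> {1..NN n}. Iinv n I i \<subset> Iinv n I c}"

text \<open>Objective T(O), with effective knowledges N'_k = min N_k F.\<close>
definition Tobj :: "nat \<Rightarrow> (nat set \<Rightarrow> nat) \<Rightarrow> (nat \<Rightarrow> real) \<Rightarrow> real \<Rightarrow> (nat \<Rightarrow> real) \<Rightarrow> real" where
  "Tobj n I Nk F Ov =
     (\<Sum>c\<in>{1..NN n}.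
        let A = Iinv n I c; f = real (card A); sS = (\<Sum>a\<in>Sset n I c. Ov a);
            sB = (\<Sum>a\<in>Bset n I c. Ov a)
        in sS / (\<Prod>k\<in>A. min (Nk k) F) *
           ((\<Sum>k\<in>A. min (Nk k) F) - f * sS - (f - 1) * sB))"

end

theory Submission
  imports Defs
begin

lemma dsum_delta:
  fixes M :: "nat \<Rightarrow> nat \<Rightarrow> real"
  assumes "finite S" "K \<in> S"
  shows "(\<Sum>i\<in>S. \<Sum>j\<in>S. (if i = K then x else 0) * M i j * (if j = K then y else 0)) = x * M K K * y"
proof -
  have "(\<Sum>i\<in>S. \<Sum>j\<in>S. (if i = K then x else 0) * M i j * (if j = K then y else 0))
      = (\<Sum>i\<in>S. if i = K then (\<Sum>j\<in>S. if j = K then x * M K K * y else 0) else 0)"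
    by (rule sum.cong) (auto intro!: sum.cong)
  also have "\<dots> = x * M K K * y" using assms by simp
  finally show ?thesis .
qed

lemma lsum_delta:
  fixes l :: "nat \<Rightarrow> real"
  assumes "finite S" "K \<in> S"
  shows "(\<Sum>i\<in>S. l i * (if i = K then t else 0)) = l K * t"
proof -
  have "(\<Sum>i\<in>S. l i * (if i = K then t else 0)) = (\<Sum>i\<in>S. if i = K then l K * t else 0)"
    by (rule sum.cong) auto
  also have "\<dots> = l K * t" using assms by simp
  finally show ?thesis .
qed

theorem mainTheorem4:
  fixes n :: nat and I :: "nat set \<Rightarrow> nat" and Nk :: "nat \<Rightarrow> real"
    and N F \<eta> :: real and l :: "nat \<Rightarrow> real" and M :: "nat \<Rightarrow> nat \<Rightarrow> real"
  assumes "n \<ge> 2"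
    and "admissible_index n I"
    and "N > 0" and "\<forall>k\<in>{1..n}. Nk k = N" and "F \<ge> real n * N"
    and "\<eta> > 0"
    and "\<forall>i\<in>{1..NN n}. \<forall>j\<in>{1..NN n}. M i j = M j i"
    and "\<forall>Ov. Tobj n I Nk F Ov =
           (\<Sum>i\<in>{1..NN n}. l i * Ov i)
           + 1/2 * (\<Sum>i\<in>{1..NN n}. \<Sum>j\<in>{1..NN n}. Ov i * M i j * Ov j)"
  shows "let Ostar = (\<lambda>i. if i = NN n then N / 2 else 0);
             \<epsilon> = (\<lambda>i. if i = NN n then - \<eta> else 0)
         in Tobj n I Nk F \<epsilon> \<le>
            - (\<Sum>i\<in>{1..NN n}. \<Sum>j\<in>{1..NN n}. Ostar i * M i j * \<epsilon> j)"
proof -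
  define K where "K = NN n"
  define e where "e t = (\<lambda>i::nat. if i = K then t else (0::real))" for t
  have bij: "bij_betw I (Xsets n) {1..K}" and mono: "\<forall>A\<in>Xsets n. \<forall>B\<in>Xsets n. A \<subset> B \<longrightarrow> I A < I B"
    using assms(2) unfolding admissible_index_def K_def by auto
  have full: "{1..n} \<in> Xsets n" using assms(1) unfolding Xsets_def by auto
  have IK: "I {1..n} = K"
  proof (rule ccontr)
    assume ne: "I {1..n} \<noteq> K"
    have "I {1..n} \<in> {1..K}" using bij full by (auto simp: bij_betw_def)
    hence Kin: "K \<in> {1..K}" by auto
    then obtain B where B: "B \<in> Xsets n" "I B = K" using bij
      by (metis bij_betw_def imageE)
    have "B \<noteq> {1..n}" using B ne by auto
    moreover have "B \<subseteq> {1..n}" using B unfolding Xsets_def by auto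
    ultimately have "I B < I {1..n}" using mono B full by auto
    thus False using B \<open>I {1..n} \<in> {1..K}\<close> by auto
  qed
  have Kin: "K \<in> {1..K}" using IK bij full by (auto simp: bij_betw_def)
  have IinvK: "Iinv n I K = {1..n}"
    unfolding Iinv_def using IK bij full by (metis bij_betw_def inv_into_f_f)
  have Iinv_sub: "Iinv n I c \<in> Xsets n" if "c \<in> {1..K}" for c
    unfolding Iinv_def using bij that by (metis bij_betw_def inv_into_into)
  have Ssum: "(\<Sum>a\<in>Sset n I c. e t a) = t" if "c \<in> {1..K}" for c t
  proof -
    have "K \<in> Sset n I c" using Kin Iinv_sub[OF that] IinvK
      unfolding Sset_def K_def Xsets_def by auto
    moreover have "finite (Sset n I c)" unfolding Sset_def by auto
    ultimately show ?thesis unfolding e_def by simp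
  qed
  have Bsum: "(\<Sum>a\<in>Bset n I c. e t a) = 0" if "c \<in> {1..K}" for c t
  proof -
    have "K \<notin> Bset n I c" using Kin Iinv_sub[OF that] IinvK
      unfolding Bset_def K_def Xsets_def by auto
    moreover have "finite (Bset n I c)" unfolding Bset_def by auto
    ultimately show ?thesis unfolding e_def by simp
  qed
  have minN: "min (Nk k) F = N" if "k \<in> {1..n}" for k
  proof -
    have "real n * N \<ge> 1 * N" using assms(1,3) by (intro mult_right_mono) auto
    thus ?thesis using assms(4,5) that by auto
  qed
  have prodN: "(\<Prod>k\<in>Iinv n I c. min (Nk k) F) = N ^ card (Iinv n I c)"
    and sumN: "(\<Sum>k\<in>Iinv n I c. min (Nk k) F) = real (card (Iinv n I c)) * N"
    if "c \<in> {1..K}" for c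
  proof -
    have sub: "Iinv n I c \<subseteq> {1..n}" using Iinv_sub[OF that] unfolding Xsets_def by auto
    have "(\<Prod>k\<in>Iinv n I c. min (Nk k) F) = (\<Prod>k\<in>Iinv n I c. N)"
      using sub minN by (intro prod.cong) auto
    thus "(\<Prod>k\<in>Iinv n I c. min (Nk k) F) = N ^ card (Iinv n I c)" by simp
    have "(\<Sum>k\<in>Iinv n I c. min (Nk k) F) = (\<Sum>k\<in>Iinv n I c. N)"
      using sub minN by (intro sum.cong) auto
    thus "(\<Sum>k\<in>Iinv n I c. min (Nk k) F) = real (card (Iinv n I c)) * N" by simp
  qed
  define b where "b = (\<Sum>c\<in>{1..K}. real (card (Iinv n I c)) / N ^ card (Iinv n I c))"
  have b0: "b \<ge> 0" unfolding b_def using assms(3) by (intro sum_nonneg) auto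
  have T: "Tobj n I Nk F (e t) = b * (N * t - t^2)" for t
  proof -
    have "Tobj n I Nk F (e t) = (\<Sum>c\<in>{1..K}. real (card (Iinv n I c)) / N ^ card (Iinv n I c) * (N * t - t^2))"
      unfolding Tobj_def Let_def K_def[symmetric]
      by (rule sum.cong) (auto simp: Ssum Bsum prodN sumN power2_eq_square algebra_simps diff_divide_distrib[symmetric])
    thus ?thesis unfolding b_def by (simp add: sum_distrib_right)
  qed
  have Q: "Tobj n I Nk F (e t) = l K * t + 1/2 * (t * M K K * t)" for t
    using assms(8)[rule_format, of "e t"] unfolding e_def K_def[symmetric]
    using dsum_delta[of "{1..K}" K t M t] lsum_delta[of "{1..K}" K l t] Kin by simp
  have MKK: "M K K = - 2 * b"
    using T[of 1] Q[of 1] T[of "-1"] Q[of "-1"] by (simp add: algebra_simps)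
  have R: "(\<Sum>i\<in>{1..K}. \<Sum>j\<in>{1..K}. (if i = K then N / 2 else 0) * M i j * (if j = K then - \<eta> else 0))
     = N / 2 * M K K * (- \<eta>)" using dsum_delta[of "{1..K}" K "N/2" M "-\<eta>"] Kin by simp
  have "Tobj n I Nk F (e (-\<eta>)) \<le> - (N / 2 * M K K * (- \<eta>))"
    unfolding T MKK using b0 by (simp add: algebra_simps)
  thus ?thesis unfolding Let_def K_def[symmetric] R unfolding e_def by simp
qed

end
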